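(* Under the multi-period setup below with Assumptions 1-MP, 2-MP(a), 3-MP and Strong Parallel Trends (5-MP), for every $g\in\mathcal{G}\setminus\{\mathcal{T}+1\}$, every $t\in\{2,\dots,\mathcal{T}\}$ with $t\ge g$, and every $d\in\mathcal{D}_+$, $$ATE(g,t,d)=\mathbb{E}[Y_t-Y_{g-1}\mid G=g,D=d]-\mathbb{E}[Y_t-Y_{g-1}\mid W_t=0].$$ If in addition 2-MP(b),(c) hold, then $d\mapsto\mathbb{E}[Y_t(g,d)\mid G=g]$ is differentiable on $\mathcal{D}_+$ and $$ACR(g,t,d)=\frac{\partial\,\mathbb{E}[Y_t-Y_{g-1}\mid G=g,D=d]}{\partial d}.$$
   Context: Multi-period setup. Periods $t=1,\dots,\mathcal{T}$. Each unit has a timing group $G\in\mathcal{G}\subseteq\{2,\dots,\mathcal{T}+1\}$ ($G=\mathcal{T}+1$ means never treated) and a dose $D\ge0$, with $D=0$ exactly for never-treated units and $D\in\mathcal{D}_+$ for units with $G\le\mathcal{T}$. Potential outcomes $Y_t(g,d)$; $Y_t(0):=Y_t(\mathcal{T}+1,0)$. $W_t:=D\,\mathbf{1}\{t\ge G\}$. Observed outcomes $Y_t=Y_t(0)\mathbf{1}\{t<G\}+Y_t(G,D)\mathbf{1}\{t\ge G\}$. $\Delta Y_t:=Y_t-Y_{t-1}$, $\Delta Y_t(0):=Y_t(0)-Y_{t-1}(0)$. All outcomes have finite second moments. 1-MP: $\{Y_{i1},\dots,Y_{i\mathcal{T}},D_i,G_i\}_{i=1}^n$ are i.i.d. 2-MP: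 (a) the support of $D$ is $\{0\}\cup\mathcal{D}_+$, $\mathcal{D}_+\subset(0,\infty)$, $\mathbb{P}(D=0)>0$, and for each $g\in\mathcal{G}\setminus\{\mathcal{T}+1\}$ every $d\in\mathcal{D}_+$ is in the support of $D$ given $G=g$; (b) $\mathcal{D}_+=[d_L,d_U]$, $0<d_L<d_U<\infty$; (c) for all $g\in\mathcal{G}\setminus\{\mathcal{T}+1\}$ and $t=2,\dots,\mathcal{T}$, $d\mapsto\mathbb{E}[\Delta Y_t\mid G=g,D=d]$ is continuously differentiable on $\mathcal{D}_+$. 3-MP: (a) for $t<g$, $Y_t(g,d)=Y_t(0)$; (b) $W_1=0$ a.s. and $W_{t-1}=d$ implies $W_t=d$ (staggered adoption). Parameters: $ATE(g,t,d):=\mathbb{E}[Y_t(g,d)-Y_t(0)\mid G=g]$; $ACR(g,t,d):=\frac{\partial\mathbb{E}[Y_t(g,d)\mid G=g]}{\partial d}$. 5-MP (Strong Parallel Trends): for all $g\in\mathcal{G}$, $t=2,\dots,\mathcal{T}$, $d\in\mathcal{D}$: $\mathbb{E}[Y_t(g,d)-Y_{t-1}(0)\mid G=g,D=d]=\mathbb{E}[Y_t(g,d)-Y_{t-1}(0)\mid G=g]$ and $\mathbb{E}[\Delta Y_t(0)\mid G=g,D=d]=\mathbb{E}[\Delta Y_t(0)\mid D=0]$. *)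

theory Defs
  imports "HOL-Probability.Probability"
begin

text \<open>Multi-period DiD with continuous treatment.
  Yp t g d \<omega> is the potential outcome Y_t(g,d); group T+1 means never treated;
  Y_t(0) := Y_t(T+1,0).\<close>

definition Yobs :: "nat \<Rightarrow> (nat \<Rightarrow> nat \<Rightarrow> real \<Rightarrow> 'a \<Rightarrow> real) \<Rightarrow> ('a \<Rightarrow> nat) \<Rightarrow> ('a \<Rightarrow> real)
    \<Rightarrow> nat \<Rightarrow> 'a \<Rightarrow> real" where
  "Yobs T Yp G D t \<omega> = (if t < G \<omega> then Yp t (Suc T) 0 \<omega> else Yp t (G \<omega>) (D \<omega>) \<omega>)"

definition W :: "('a \<Rightarrow> nat) \<Rightarrow> ('a \<Rightarrow> real) \<Rightarrow> nat \<Rightarrow> 'a \<Rightarrow> real" where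
  "W G D t \<omega> = (if G \<omega> \<le> t then D \<omega> else 0)"

definition cexp_ev :: "'a measure \<Rightarrow> 'a set \<Rightarrow> ('a \<Rightarrow> real) \<Rightarrow> real" where
  "cexp_ev M A X = (\<integral>\<omega>. indicator A \<omega> * X \<omega> \<partial>M) / measure M A"

text \<open>E[X | G=g, D=d], computed from a regular conditional distribution K of the
  sample point given (G,D).\<close>
definition cexp_GD :: "(nat \<Rightarrow> real \<Rightarrow> 'a measure) \<Rightarrow> ('a \<Rightarrow> real) \<Rightarrow> nat \<Rightarrow> real \<Rightarrow> real" where
  "cexp_GD K X g d = (\<integral>\<omega>. X \<omega> \<partial>(K g d))"

definition supp_GD :: "nat \<Rightarrow> nat set \<Rightarrow> real set \<Rightarrow> (nat \<times> real) set" where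
  "supp_GD T Gs Dp = {(g, d). g \<in> Gs \<and> ((g = Suc T \<and> d = 0) \<or> (g \<le> T \<and> d \<in> Dp))}"

definition rcd :: "'a measure \<Rightarrow> ('a \<Rightarrow> nat) \<Rightarrow> ('a \<Rightarrow> real) \<Rightarrow> (nat \<Rightarrow> real \<Rightarrow> 'a measure)
    \<Rightarrow> (nat \<times> real) set \<Rightarrow> bool" where
  "rcd M G D K S \<longleftrightarrow>
     (\<forall>g d. prob_space (K g d) \<and> sets (K g d) = sets M) \<and>
     (\<forall>A\<in>sets M. (\<lambda>\<omega>. measure (K (G \<omega>) (D \<omega>)) A) \<in> borel_measurable M) \<and>
     (\<forall>A\<in>sets M. \<forall>B\<in>sets borel. \<forall>g.
        measure M (A \<inter> {\<omega>\<in>space M. G \<omega> = g \<and> D \<omega> \<in> B})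
        = (\<integral>\<omega>. indicator {\<omega>\<in>space M. G \<omega> = g \<and> D \<omega> \<in> B} \<omega> * measure (K (G \<omega>) (D \<omega>)) A \<partial>M)) \<and>
     (\<forall>(g, d)\<in>S. AE \<omega> in K g d. G \<omega> = g \<and> D \<omega> = d)"

definition in_support :: "'a measure \<Rightarrow> ('a \<Rightarrow> real) \<Rightarrow> real \<Rightarrow> bool" where
  "in_support M X x \<longleftrightarrow> (\<forall>e>0. measure M {\<omega>\<in>space M. dist (X \<omega>) x < e} > 0)"

definition in_support_given :: "'a measure \<Rightarrow> ('a \<Rightarrow> nat) \<Rightarrow> nat \<Rightarrow> ('a \<Rightarrow> real) \<Rightarrow> real \<Rightarrow> bool" where
  "in_support_given M G g X x \<longleftrightarrow>
     (\<forall>e>0. measure M {\<omega>\<in>space M. G \<omega> = g \<and> dist (X \<omega>) x < e} > 0)"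

definition ATE :: "'a measure \<Rightarrow> ('a \<Rightarrow> nat) \<Rightarrow> nat \<Rightarrow> (nat \<Rightarrow> nat \<Rightarrow> real \<Rightarrow> 'a \<Rightarrow> real)
    \<Rightarrow> nat \<Rightarrow> nat \<Rightarrow> real \<Rightarrow> real" where
  "ATE M G T Yp g t d = cexp_ev M {\<omega>\<in>space M. G \<omega> = g} (\<lambda>\<omega>. Yp t g d \<omega> - Yp t (Suc T) 0 \<omega>)"

text \<open>ACR(g,t,d): derivative in d of E[Y_t(g,d) | G=g], taken within D_+ (one-sided at endpoints).\<close>
definition ACR :: "'a measure \<Rightarrow> ('a \<Rightarrow> nat) \<Rightarrow> real set \<Rightarrow> (nat \<Rightarrow> nat \<Rightarrow> real \<Rightarrow> 'a \<Rightarrow> real)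
    \<Rightarrow> nat \<Rightarrow> nat \<Rightarrow> real \<Rightarrow> real" where
  "ACR M G Dp Yp g t d =
     vector_derivative (\<lambda>x. cexp_ev M {\<omega>\<in>space M. G \<omega> = g} (Yp t g x)) (at d within Dp)"

definition C1_within :: "real set \<Rightarrow> (real \<Rightarrow> real) \<Rightarrow> bool" where
  "C1_within S f \<longleftrightarrow>
     (\<exists>f'. (\<forall>x\<in>S. (f has_real_derivative f' x) (at x within S)) \<and> continuous_on S f')"

end

theory Submission
  imports Defs
begin


lemma disint_nn:
  fixes M :: "'a measure" and K :: "nat \<Rightarrow> real \<Rightarrow> 'a measure"
  assumes prob: "prob_space M"
    and G_meas: "G \<in> measurable M (count_space UNIV)"
    and D_meas: "D \<in> borel_measurable M"
    and Kprob: "\<forall>g d. prob_space (K g d) \<and> sets (K g d) = sets M"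
    and Kmeas: "\<forall>A\<in>sets M. (\<lambda>\<omega>. measure (K (G \<omega>) (D \<omega>)) A) \<in> borel_measurable M"
    and Keq: "\<forall>A\<in>sets M. \<forall>g. measure M (A \<inter> {\<omega>\<in>space M. G \<omega> = g})
        = (\<integral>\<omega>. indicator {\<omega>\<in>space M. G \<omega> = g} \<omega> * measure (K (G \<omega>) (D \<omega>)) A \<partial>M)"
    and finS: "finite S"
    and f: "f \<in> borel_measurable M"
  shows "(\<integral>\<^sup>+\<omega>. indicator {\<omega>\<in>space M. G \<omega> \<in> S} \<omega> * f \<omega> \<partial>M)
       = (\<integral>\<^sup>+\<omega>. indicator {\<omega>\<in>space M. G \<omega> \<in> S} \<omega> * (\<integral>\<^sup>+y. f y \<partial>K (G \<omega>) (D \<omega>)) \<partial>M)"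
proof -
  interpret prob_space M by (rule prob)
  have Kem: "\<And>g d A. emeasure (K g d) A = ennreal (measure (K g d) A)"
    using Kprob by (metis finite_measure.emeasure_eq_measure prob_space_def)
  define E where "E = {\<omega>\<in>space M. G \<omega> \<in> S}"
  have E: "E \<in> sets M" unfolding E_def using G_meas by measurable
  define Kf where "Kf = (\<lambda>\<omega>. K (G \<omega>) (D \<omega>))"
  define M' where "M' = density M (indicator E)"
  have sM': "sets M' = sets M" and spM': "space M' = space M" unfolding M'_def by auto
  have Kf_meas: "Kf \<in> measurable M (subprob_algebra M)"
  proof (rule measurable_subprob_algebra)
    fix a show "subprob_space (Kf a)" using Kprob unfolding Kf_def
      by (simp add: prob_space_imp_subprob_space)
    show "sets (Kf a) = sets M" using Kprob unfolding Kf_def by simp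
  next
    fix A assume A: "A \<in> sets M"
    have "(\<lambda>a. emeasure (Kf a) A) = (\<lambda>a. ennreal (measure (Kf a) A))"
      unfolding Kf_def by (simp add: Kem)
    moreover have "(\<lambda>a. measure (Kf a) A) \<in> borel_measurable M" using Kmeas A unfolding Kf_def by simp
    ultimately show "(\<lambda>a. emeasure (Kf a) A) \<in> borel_measurable M" by simp
  qed
  have Kf_meas': "Kf \<in> measurable M' (subprob_algebra M)"
    using Kf_meas by (simp add: measurable_cong_sets[OF sM' refl])
  have ne: "space M' \<noteq> {}" using spM' not_empty by simp
  have ind_sum: "\<And>\<omega>. indicator E \<omega> = (\<Sum>g\<in>S. indicator {\<omega>\<in>space M. G \<omega> = g} \<omega> :: real)"
  proof -
    fix \<omega>
    have "(\<Sum>g\<in>S. indicator {\<omega>\<in>space M. G \<omega> = g} \<omega> :: real)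
        = (\<Sum>g\<in>S. if g = G \<omega> then indicator (space M) \<omega> else 0)"
      by (rule sum.cong) (auto simp: indicator_def)
    also have "\<dots> = indicator E \<omega>" using finS by (simp add: E_def indicator_def)
    finally show "indicator E \<omega> = (\<Sum>g\<in>S. indicator {\<omega>\<in>space M. G \<omega> = g} \<omega> :: real)" by simp
  qed
  have eqM: "M' = bind M' Kf"
  proof (rule measure_eqI)
    show "sets M' = sets (bind M' Kf)" using sM' ne Kprob by (simp add: Kf_def)
  next
    fix A assume "A \<in> sets M'"
    then have A: "A \<in> sets M" using sM' by simp
    have mKA: "(\<lambda>\<omega>. measure (Kf \<omega>) A) \<in> borel_measurable M" using Kmeas A unfolding Kf_def by simp
    have Gg: "\<And>g. {\<omega>\<in>space M. G \<omega> = g} \<in> sets M" using G_meas by measurable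
    have "emeasure M' A = (\<integral>\<^sup>+x. indicator E x * indicator A x \<partial>M)"
      unfolding M'_def using E A by (intro emeasure_density) auto
    also have "\<dots> = (\<integral>\<^sup>+x. indicator (A \<inter> E) x \<partial>M)"
      by (intro nn_integral_cong) (auto simp: indicator_def)
    also have "\<dots> = emeasure M (A \<inter> E)" using A E by simp
    also have "\<dots> = ennreal (measure M (A \<inter> E))" by (simp add: emeasure_eq_measure)
    also have "A \<inter> E = (\<Union>g\<in>S. A \<inter> {\<omega>\<in>space M. G \<omega> = g})" unfolding E_def by auto
    also have "measure M \<dots> = (\<Sum>g\<in>S. measure M (A \<inter> {\<omega>\<in>space M. G \<omega> = g}))"
      using finS A Gg by (intro finite_measure_finite_Union) (auto simp: disjoint_family_on_def)
    also have "\<dots> = (\<Sum>g\<in>S. \<integral>\<omega>. indicator {\<omega>\<in>space M. G \<omega> = g} \<omega> * measure (Kf \<omega>) A \<partial>M)"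
      using Keq A unfolding Kf_def by simp
    also have "\<dots> = (\<integral>\<omega>. (\<Sum>g\<in>S. indicator {\<omega>\<in>space M. G \<omega> = g} \<omega> * measure (Kf \<omega>) A) \<partial>M)"
    proof (rule Bochner_Integration.integral_sum[symmetric])
      fix g
      show "integrable M (\<lambda>\<omega>. indicator {\<omega>\<in>space M. G \<omega> = g} \<omega> * measure (Kf \<omega>) A)"
      proof (rule integrable_const_bound[where B=1])
        show "AE x in M. norm (indicator {\<omega>\<in>space M. G \<omega> = g} x * measure (Kf x) A) \<le> (1::real)"
          using Kprob unfolding Kf_def by (auto simp: indicator_def prob_space.prob_le_1)
        show "(\<lambda>\<omega>. indicator {\<omega>\<in>space M. G \<omega> = g} \<omega> * measure (Kf \<omega>) A) \<in> borel_measurable M"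
          using mKA Gg by (intro borel_measurable_times borel_measurable_indicator) auto
      qed
    qed
    also have "\<dots> = (\<integral>\<omega>. indicator E \<omega> * measure (Kf \<omega>) A \<partial>M)"
      by (simp add: ind_sum sum_distrib_right)
    finally have 1: "emeasure M' A = ennreal (\<integral>\<omega>. indicator E \<omega> * measure (Kf \<omega>) A \<partial>M)" .
    have "emeasure (bind M' Kf) A = (\<integral>\<^sup>+\<omega>. emeasure (Kf \<omega>) A \<partial>M')"
      using ne Kf_meas' A by (simp add: emeasure_bind)
    also have "\<dots> = (\<integral>\<^sup>+\<omega>. indicator E \<omega> * emeasure (Kf \<omega>) A \<partial>M)"
      unfolding M'_def using E Kf_meas A
      by (intro nn_integral_density) (auto intro: measurable_emeasure_subprob_algebra)
    also have "\<dots> = (\<integral>\<^sup>+\<omega>. ennreal (indicator E \<omega> * measure (Kf \<omega>) A) \<partial>M)"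
      unfolding Kf_def
      by (intro nn_integral_cong) (auto simp: indicator_def Kem)
    also have "\<dots> = ennreal (\<integral>\<omega>. indicator E \<omega> * measure (Kf \<omega>) A \<partial>M)"
    proof (rule nn_integral_eq_integral)
      show "integrable M (\<lambda>\<omega>. indicator E \<omega> * measure (Kf \<omega>) A)"
      proof (rule integrable_const_bound[where B=1])
        show "AE x in M. norm (indicator E x * measure (Kf x) A) \<le> (1::real)"
          using Kprob unfolding Kf_def by (auto simp: indicator_def prob_space.prob_le_1)
        show "(\<lambda>\<omega>. indicator E \<omega> * measure (Kf \<omega>) A) \<in> borel_measurable M"
          using mKA E by (intro borel_measurable_times borel_measurable_indicator) auto
      qed
      show "AE x in M. 0 \<le> indicator E x * measure (Kf x) A" by (simp)
    qed
    finally show "emeasure M' A = emeasure (bind M' Kf) A" using 1 by simp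
  qed
  have "(\<integral>\<^sup>+\<omega>. indicator E \<omega> * f \<omega> \<partial>M) = (\<integral>\<^sup>+\<omega>. f \<omega> \<partial>M')"
    unfolding M'_def using E f by (simp add: nn_integral_density)
  also have "\<dots> = (\<integral>\<^sup>+\<omega>. f \<omega> \<partial>(bind M' Kf))" using eqM by simp
  also have "\<dots> = (\<integral>\<^sup>+\<omega>. (\<integral>\<^sup>+y. f y \<partial>Kf \<omega>) \<partial>M')"
    using f Kf_meas' by (rule nn_integral_bind)
  also have "\<dots> = (\<integral>\<^sup>+\<omega>. indicator E \<omega> * (\<integral>\<^sup>+y. f y \<partial>Kf \<omega>) \<partial>M)"
    unfolding M'_def using E f Kf_meas
    by (intro nn_integral_density) auto
  finally show ?thesis unfolding E_def Kf_def .
qed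

lemma Kf_measurable:
  assumes Kprob: "\<forall>g d. prob_space (K g d) \<and> sets (K g d) = sets M"
    and Kmeas: "\<forall>A\<in>sets M. (\<lambda>\<omega>. measure (K (G \<omega>) (D \<omega>)) A) \<in> borel_measurable M"
  shows "(\<lambda>\<omega>. K (G \<omega>) (D \<omega>)) \<in> measurable M (subprob_algebra M)"
proof (rule measurable_subprob_algebra)
  have Kem: "\<And>g d A. emeasure (K g d) A = ennreal (measure (K g d) A)"
    using Kprob by (metis finite_measure.emeasure_eq_measure prob_space_def)
  fix a show "subprob_space (K (G a) (D a))" using Kprob
    by (simp add: prob_space_imp_subprob_space)
  show "sets (K (G a) (D a)) = sets M" using Kprob by simp
next
  fix A assume A: "A \<in> sets M"
  have Kem: "\<And>g d A. emeasure (K g d) A = ennreal (measure (K g d) A)"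
    using Kprob by (metis finite_measure.emeasure_eq_measure prob_space_def)
  have "(\<lambda>a. measure (K (G a) (D a)) A) \<in> borel_measurable M" using Kmeas A by simp
  then show "(\<lambda>a. emeasure (K (G a) (D a)) A) \<in> borel_measurable M" by (simp add: Kem)
qed

lemma disint_real:
  fixes M :: "'a measure" and K :: "nat \<Rightarrow> real \<Rightarrow> 'a measure" and X :: "'a \<Rightarrow> real"
  assumes prob: "prob_space M"
    and G_meas: "G \<in> measurable M (count_space UNIV)"
    and D_meas: "D \<in> borel_measurable M"
    and Kprob: "\<forall>g d. prob_space (K g d) \<and> sets (K g d) = sets M"
    and Kmeas: "\<forall>A\<in>sets M. (\<lambda>\<omega>. measure (K (G \<omega>) (D \<omega>)) A) \<in> borel_measurable M"
    and Keq: "\<forall>A\<in>sets M. \<forall>g. measure M (A \<inter> {\<omega>\<in>space M. G \<omega> = g})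
        = (\<integral>\<omega>. indicator {\<omega>\<in>space M. G \<omega> = g} \<omega> * measure (K (G \<omega>) (D \<omega>)) A \<partial>M)"
    and finS: "finite S"
    and XM: "integrable M X"
    and hK: "\<forall>\<omega>\<in>space M. G \<omega> \<in> S \<longrightarrow>
       integrable (K (G \<omega>) (D \<omega>)) X \<and> integral\<^sup>L (K (G \<omega>) (D \<omega>)) X = c"
  shows "(\<integral>\<omega>. indicator {\<omega>\<in>space M. G \<omega> \<in> S} \<omega> * X \<omega> \<partial>M)
       = c * measure M {\<omega>\<in>space M. G \<omega> \<in> S}"
proof -
  interpret prob_space M by (rule prob)
  define E where "E = {\<omega>\<in>space M. G \<omega> \<in> S}"
  have E: "E \<in> sets M" unfolding E_def using G_meas by measurable
  have Xm: "X \<in> borel_measurable M" using XM by auto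
  have Kf_meas: "(\<lambda>\<omega>. K (G \<omega>) (D \<omega>)) \<in> measurable M (subprob_algebra M)"
    using Kprob Kmeas by (rule Kf_measurable)
  have DI: "\<And>f. f \<in> borel_measurable M \<Longrightarrow> (\<integral>\<^sup>+\<omega>. indicator E \<omega> * f \<omega> \<partial>M)
       = (\<integral>\<^sup>+\<omega>. indicator E \<omega> * (\<integral>\<^sup>+y. f y \<partial>K (G \<omega>) (D \<omega>)) \<partial>M)"
    unfolding E_def using prob G_meas D_meas Kprob Kmeas Keq finS by (rule disint_nn)
  have part: "\<And>Y. integrable M Y \<Longrightarrow> (\<forall>\<omega>\<in>E. integrable (K (G \<omega>) (D \<omega>)) Y) \<Longrightarrow>
     integrable M (\<lambda>\<omega>. indicator E \<omega> * enn2real (\<integral>\<^sup>+y. ennreal (Y y) \<partial>K (G \<omega>) (D \<omega>))) \<and>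
     enn2real (\<integral>\<^sup>+\<omega>. ennreal (indicator E \<omega> * Y \<omega>) \<partial>M)
       = (\<integral>\<omega>. indicator E \<omega> * enn2real (\<integral>\<^sup>+y. ennreal (Y y) \<partial>K (G \<omega>) (D \<omega>)) \<partial>M)"
  proof -
    fix Y :: "'a \<Rightarrow> real" assume YM: "integrable M Y" and YK: "\<forall>\<omega>\<in>E. integrable (K (G \<omega>) (D \<omega>)) Y"
    have Ym: "Y \<in> borel_measurable M" using YM by auto
    define P where "P = (\<lambda>\<omega>. \<integral>\<^sup>+y. ennreal (Y y) \<partial>K (G \<omega>) (D \<omega>))"
    have Pm: "P \<in> borel_measurable M" unfolding P_def
      using measurable_compose[OF Kf_meas nn_integral_measurable_subprob_algebra] Ym by auto
    have Pfin: "P \<omega> < \<infinity>" if "\<omega> \<in> E" for \<omega>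
    proof -
      have I: "integrable (K (G \<omega>) (D \<omega>)) Y" using YK that by auto
      have "P \<omega> \<le> (\<integral>\<^sup>+y. ennreal (norm (Y y)) \<partial>K (G \<omega>) (D \<omega>))"
        unfolding P_def by (intro nn_integral_mono) auto
      also have "\<dots> < \<infinity>" using I by (simp add: integrable_iff_bounded)
      finally show ?thesis .
    qed
    have eq1: "(\<integral>\<^sup>+\<omega>. ennreal (indicator E \<omega> * Y \<omega>) \<partial>M) = (\<integral>\<^sup>+\<omega>. indicator E \<omega> * ennreal (Y \<omega>) \<partial>M)"
      by (intro nn_integral_cong) (auto simp: indicator_def)
    also have "\<dots> = (\<integral>\<^sup>+\<omega>. indicator E \<omega> * P \<omega> \<partial>M)" unfolding P_def
      using Ym by (intro DI) auto
    also have "\<dots> = (\<integral>\<^sup>+\<omega>. ennreal (indicator E \<omega> * enn2real (P \<omega>)) \<partial>M)"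
      using Pfin by (intro nn_integral_cong) (auto simp: indicator_def less_top[symmetric])
    finally have eq: "(\<integral>\<^sup>+\<omega>. ennreal (indicator E \<omega> * Y \<omega>) \<partial>M)
      = (\<integral>\<^sup>+\<omega>. ennreal (indicator E \<omega> * enn2real (P \<omega>)) \<partial>M)" .
    have pm: "(\<lambda>\<omega>. indicator E \<omega> * enn2real (P \<omega>)) \<in> borel_measurable M"
      using E Pm by (intro borel_measurable_times borel_measurable_indicator borel_measurable_enn2real) auto
    have "(\<integral>\<^sup>+\<omega>. ennreal (indicator E \<omega> * Y \<omega>) \<partial>M) \<le> (\<integral>\<^sup>+\<omega>. ennreal (norm (Y \<omega>)) \<partial>M)"
      by (intro nn_integral_mono) (auto simp: indicator_def)
    also have "\<dots> < \<infinity>" using YM by (simp add: integrable_iff_bounded)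
    finally have fin: "(\<integral>\<^sup>+\<omega>. ennreal (indicator E \<omega> * enn2real (P \<omega>)) \<partial>M) < \<infinity>" using eq by simp
    have "integrable M (\<lambda>\<omega>. indicator E \<omega> * enn2real (P \<omega>))"
      unfolding integrable_iff_bounded using pm fin
      by (simp add: abs_mult)
    moreover have "enn2real (\<integral>\<^sup>+\<omega>. ennreal (indicator E \<omega> * Y \<omega>) \<partial>M)
       = (\<integral>\<omega>. indicator E \<omega> * enn2real (P \<omega>) \<partial>M)"
      unfolding eq using pm by (intro integral_eq_nn_integral[symmetric]) auto
    ultimately show "integrable M (\<lambda>\<omega>. indicator E \<omega> * enn2real (\<integral>\<^sup>+y. ennreal (Y y) \<partial>K (G \<omega>) (D \<omega>))) \<and>
     enn2real (\<integral>\<^sup>+\<omega>. ennreal (indicator E \<omega> * Y \<omega>) \<partial>M)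
       = (\<integral>\<omega>. indicator E \<omega> * enn2real (\<integral>\<^sup>+y. ennreal (Y y) \<partial>K (G \<omega>) (D \<omega>)) \<partial>M)"
      unfolding P_def by simp
  qed
  have XK: "\<forall>\<omega>\<in>E. integrable (K (G \<omega>) (D \<omega>)) X" using hK unfolding E_def by auto
  have XK': "\<forall>\<omega>\<in>E. integrable (K (G \<omega>) (D \<omega>)) (\<lambda>x. - X x)" using XK by auto
  note p = part[OF XM XK] and n = part[of "\<lambda>x. - X x", OF _ XK'] 
  have n': "integrable M (\<lambda>\<omega>. indicator E \<omega> * enn2real (\<integral>\<^sup>+y. ennreal (- X y) \<partial>K (G \<omega>) (D \<omega>))) \<and>
     enn2real (\<integral>\<^sup>+\<omega>. ennreal (indicator E \<omega> * - X \<omega>) \<partial>M)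
       = (\<integral>\<omega>. indicator E \<omega> * enn2real (\<integral>\<^sup>+y. ennreal (- X y) \<partial>K (G \<omega>) (D \<omega>)) \<partial>M)"
    using n XM by auto
  have IX: "integrable M (\<lambda>\<omega>. indicator E \<omega> * X \<omega>)" using integrable_real_mult_indicator[OF E XM]
    by (simp add: mult.commute)
  have "(\<integral>\<omega>. indicator E \<omega> * X \<omega> \<partial>M)
     = enn2real (\<integral>\<^sup>+\<omega>. ennreal (indicator E \<omega> * X \<omega>) \<partial>M)
       - enn2real (\<integral>\<^sup>+\<omega>. ennreal (- (indicator E \<omega> * X \<omega>)) \<partial>M)"
    using IX by (rule real_lebesgue_integral_def)
  also have "\<dots> = (\<integral>\<omega>. indicator E \<omega> * enn2real (\<integral>\<^sup>+y. ennreal (X y) \<partial>K (G \<omega>) (D \<omega>)) \<partial>M)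
      - (\<integral>\<omega>. indicator E \<omega> * enn2real (\<integral>\<^sup>+y. ennreal (- X y) \<partial>K (G \<omega>) (D \<omega>)) \<partial>M)"
    using p n' by simp
  also have "\<dots> = (\<integral>\<omega>. indicator E \<omega> * enn2real (\<integral>\<^sup>+y. ennreal (X y) \<partial>K (G \<omega>) (D \<omega>))
      - indicator E \<omega> * enn2real (\<integral>\<^sup>+y. ennreal (- X y) \<partial>K (G \<omega>) (D \<omega>)) \<partial>M)"
    using p n' by (intro Bochner_Integration.integral_diff[symmetric]) auto
  also have "\<dots> = (\<integral>\<omega>. indicator E \<omega> * c \<partial>M)"
  proof (rule Bochner_Integration.integral_cong[OF refl])
    fix \<omega> assume "\<omega> \<in> space M"
    show "indicator E \<omega> * enn2real (\<integral>\<^sup>+y. ennreal (X y) \<partial>K (G \<omega>) (D \<omega>))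
      - indicator E \<omega> * enn2real (\<integral>\<^sup>+y. ennreal (- X y) \<partial>K (G \<omega>) (D \<omega>)) = indicator E \<omega> * c"
    proof (cases "\<omega> \<in> E")
      case True
      then have "integrable (K (G \<omega>) (D \<omega>)) X" "integral\<^sup>L (K (G \<omega>) (D \<omega>)) X = c"
        using hK unfolding E_def by auto
      then show ?thesis using True real_lebesgue_integral_def[of "K (G \<omega>) (D \<omega>)" X] by simp
    qed simp
  qed
  also have "\<dots> = c * measure M E" using E by simp
  finally show ?thesis unfolding E_def .
qed


lemma tele:
  fixes f :: "nat \<Rightarrow> real"
  shows "a \<le> b \<Longrightarrow> (\<Sum>s\<in>{Suc a..b}. f s - f (s - 1)) = f b - f a"
  by (induction b) (auto simp: le_Suc_eq)

lemma intI_ind: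
  fixes f :: "'a \<Rightarrow> real"
  shows "integrable M f \<Longrightarrow> A \<in> sets M \<Longrightarrow> integrable M (\<lambda>\<omega>. indicator A \<omega> * f \<omega>)"
  using integrable_real_mult_indicator[of A M f] by (simp add: mult.commute)

theorem theorem4:
  fixes M :: "'a measure" and T :: nat and Gs :: "nat set" and Dp :: "real set"
    and G :: "'a \<Rightarrow> nat" and D :: "'a \<Rightarrow> real"
    and Yp :: "nat \<Rightarrow> nat \<Rightarrow> real \<Rightarrow> 'a \<Rightarrow> real"
    and K :: "nat \<Rightarrow> real \<Rightarrow> 'a measure"
  assumes prob: "prob_space M"
    and G_meas: "G \<in> measurable M (count_space UNIV)"
    and D_meas: "D \<in> borel_measurable M"
    and Gs_sub: "Gs \<subseteq> {2..Suc T}"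
    and G_in: "\<forall>\<omega>\<in>space M. G \<omega> \<in> Gs"
    and Gs_pos: "\<forall>g\<in>Gs. measure M {\<omega>\<in>space M. G \<omega> = g} > 0"
    and D_zero: "\<forall>\<omega>\<in>space M. D \<omega> = 0 \<longleftrightarrow> G \<omega> = Suc T"
    and D_treated: "\<forall>\<omega>\<in>space M. G \<omega> \<le> T \<longrightarrow> D \<omega> \<in> Dp"
    \<comment> \<open>Assumption 2-MP(a)\<close>
    and A2a_supp: "{x. in_support M D x} = {0} \<union> Dp"
    and A2a_pos: "Dp \<subseteq> {0<..}"
    and A2a_P0: "measure M {\<omega>\<in>space M. D \<omega> = 0} > 0"
    and A2a_cond: "\<forall>g\<in>Gs - {Suc T}. \<forall>d\<in>Dp. in_support_given M G g D d"
    \<comment> \<open>finite second moments of potential and observed outcomes\<close>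
    and mom_PO: "\<forall>t\<in>{1..T}. \<forall>(g, d)\<in>supp_GD T Gs Dp \<union> {(Suc T, 0)}.
        Yp t g d \<in> borel_measurable M \<and> integrable M (\<lambda>\<omega>. (Yp t g d \<omega>)\<^sup>2)"
    and mom_obs: "\<forall>t\<in>{1..T}. Yobs T Yp G D t \<in> borel_measurable M \<and>
        integrable M (\<lambda>\<omega>. (Yobs T Yp G D t \<omega>)\<^sup>2)"
    \<comment> \<open>conditional expectations given (G,D) via a regular conditional distribution\<close>
    and rcd: "rcd M G D K (supp_GD T Gs Dp)"
    and mom_cond: "\<forall>(g', d')\<in>supp_GD T Gs Dp. \<forall>t\<in>{1..T}.
        \<forall>(g, d)\<in>supp_GD T Gs Dp \<union> {(Suc T, 0)}. integrable (K g' d') (\<lambda>\<omega>. (Yp t g d \<omega>)\<^sup>2)"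
    \<comment> \<open>Assumption 3-MP\<close>
    and A3a: "\<forall>(g, d)\<in>supp_GD T Gs Dp. \<forall>t\<in>{1..T}. t < g \<longrightarrow>
        (\<forall>\<omega>\<in>space M. Yp t g d \<omega> = Yp t (Suc T) 0 \<omega>)"
    and A3b_1: "AE \<omega> in M. W G D 1 \<omega> = 0"
    and A3b_2: "\<forall>t\<in>{2..T}. \<forall>d\<in>Dp. \<forall>\<omega>\<in>space M. W G D (t - 1) \<omega> = d \<longrightarrow> W G D t \<omega> = d"
    \<comment> \<open>Assumption 5-MP (strong parallel trends)\<close>
    and SPT: "\<forall>(g, d)\<in>supp_GD T Gs Dp. \<forall>t\<in>{2..T}.
        cexp_GD K (\<lambda>\<omega>. Yp t g d \<omega> - Yp (t - 1) (Suc T) 0 \<omega>) g d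
          = cexp_ev M {\<omega>\<in>space M. G \<omega> = g} (\<lambda>\<omega>. Yp t g d \<omega> - Yp (t - 1) (Suc T) 0 \<omega>) \<and>
        cexp_GD K (\<lambda>\<omega>. Yp t (Suc T) 0 \<omega> - Yp (t - 1) (Suc T) 0 \<omega>) g d
          = cexp_ev M {\<omega>\<in>space M. D \<omega> = 0} (\<lambda>\<omega>. Yp t (Suc T) 0 \<omega> - Yp (t - 1) (Suc T) 0 \<omega>)"
  shows
    "(\<forall>g\<in>Gs - {Suc T}. \<forall>t\<in>{2..T}. g \<le> t \<longrightarrow> (\<forall>d\<in>Dp.
        ATE M G T Yp g t d
          = cexp_GD K (\<lambda>\<omega>. Yobs T Yp G D t \<omega> - Yobs T Yp G D (g - 1) \<omega>) g d
            - cexp_ev M {\<omega>\<in>space M. W G D t \<omega> = 0}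
                (\<lambda>\<omega>. Yobs T Yp G D t \<omega> - Yobs T Yp G D (g - 1) \<omega>)))
     \<and>
     (((\<exists>dL dU. 0 < dL \<and> dL < dU \<and> Dp = {dL..dU}) \<and>
       (\<forall>g\<in>Gs - {Suc T}. \<forall>t\<in>{2..T}.
          C1_within Dp (\<lambda>d. cexp_GD K (\<lambda>\<omega>. Yobs T Yp G D t \<omega> - Yobs T Yp G D (t - 1) \<omega>) g d)))
      \<longrightarrow>
      (\<forall>g\<in>Gs - {Suc T}. \<forall>t\<in>{2..T}. g \<le> t \<longrightarrow>
         (\<lambda>d. cexp_ev M {\<omega>\<in>space M. G \<omega> = g} (Yp t g d)) differentiable_on Dp \<and>
         (\<forall>d\<in>Dp. ACR M G Dp Yp g t d
            = vector_derivative
                (\<lambda>x. cexp_GD K (\<lambda>\<omega>. Yobs T Yp G D t \<omega> - Yobs T Yp G D (g - 1) \<omega>) g x)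
                (at d within Dp))))"
proof -
  interpret prob_space M by (rule prob)
  have Kprob: "\<forall>g d. prob_space (K g d) \<and> sets (K g d) = sets M"
    and Kmeas: "\<forall>A\<in>sets M. (\<lambda>\<omega>. measure (K (G \<omega>) (D \<omega>)) A) \<in> borel_measurable M"
    and Keq0: "\<forall>A\<in>sets M. \<forall>B\<in>sets borel. \<forall>g.
        measure M (A \<inter> {\<omega>\<in>space M. G \<omega> = g \<and> D \<omega> \<in> B})
        = (\<integral>\<omega>. indicator {\<omega>\<in>space M. G \<omega> = g \<and> D \<omega> \<in> B} \<omega> * measure (K (G \<omega>) (D \<omega>)) A \<partial>M)"
    and Kae: "\<forall>(g, d)\<in>supp_GD T Gs Dp. AE \<omega> in K g d. G \<omega> = g \<and> D \<omega> = d"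
    using rcd unfolding rcd_def by blast+
  have Keq: "\<forall>A\<in>sets M. \<forall>g. measure M (A \<inter> {\<omega>\<in>space M. G \<omega> = g})
        = (\<integral>\<omega>. indicator {\<omega>\<in>space M. G \<omega> = g} \<omega> * measure (K (G \<omega>) (D \<omega>)) A \<partial>M)"
  proof (intro ballI allI)
    fix A g assume "A \<in> sets M"
    then show "measure M (A \<inter> {\<omega>\<in>space M. G \<omega> = g})
        = (\<integral>\<omega>. indicator {\<omega>\<in>space M. G \<omega> = g} \<omega> * measure (K (G \<omega>) (D \<omega>)) A \<partial>M)"
      using Keq0[rule_format, of A UNIV g] by simp
  qed
  have Kset: "\<And>g d. sets (K g d) = sets M" and Kps: "\<And>g d. prob_space (K g d)" using Kprob by auto
  have finGs: "finite Gs" using Gs_sub finite_subset by blast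
  have supp_om: "\<And>\<omega>. \<omega> \<in> space M \<Longrightarrow> (G \<omega>, D \<omega>) \<in> supp_GD T Gs Dp"
  proof -
    fix \<omega> assume om: "\<omega> \<in> space M"
    have "G \<omega> \<in> Gs" using G_in om by auto
    moreover have "G \<omega> \<le> Suc T" using Gs_sub \<open>G \<omega> \<in> Gs\<close> by auto
    ultimately show "(G \<omega>, D \<omega>) \<in> supp_GD T Gs Dp"
      using D_zero D_treated om unfolding supp_GD_def by (auto simp: le_Suc_eq)
  qed
  have sqK: "\<And>g d (f::'a \<Rightarrow> real). f \<in> borel_measurable M \<Longrightarrow> integrable (K g d) (\<lambda>x. (f x)\<^sup>2) \<Longrightarrow> integrable (K g d) f"
  proof -
    fix g d and f :: "'a \<Rightarrow> real"
    assume "f \<in> borel_measurable M" "integrable (K g d) (\<lambda>x. (f x)\<^sup>2)"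
    moreover have "f \<in> borel_measurable (K g d) \<longleftrightarrow> f \<in> borel_measurable M"
      using measurable_cong_sets[OF Kset[of g d] refl, of "borel :: real measure"] by simp
    ultimately show "integrable (K g d) f"
      using finite_measure.square_integrable_imp_integrable[of "K g d" f] Kps prob_space_def by blast
  qed
  have Ym: "\<And>s g d. s\<in>{1..T} \<Longrightarrow> (g, d)\<in>supp_GD T Gs Dp \<union> {(Suc T, 0)} \<Longrightarrow> Yp s g d \<in> borel_measurable M"
    using mom_PO by blast
  have YintM: "\<And>s g d. s\<in>{1..T} \<Longrightarrow> (g, d)\<in>supp_GD T Gs Dp \<union> {(Suc T, 0)} \<Longrightarrow> integrable M (Yp s g d)"
    using mom_PO square_integrable_imp_integrable by blast
  have YintK: "\<And>g' d' s g d. (g', d')\<in>supp_GD T Gs Dp \<Longrightarrow> s\<in>{1..T} \<Longrightarrow>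
      (g, d)\<in>supp_GD T Gs Dp \<union> {(Suc T, 0)} \<Longrightarrow> integrable (K g' d') (Yp s g d)"
  proof -
    fix g' d' s g d assume a: "(g', d')\<in>supp_GD T Gs Dp" "s\<in>{1..T}" "(g, d)\<in>supp_GD T Gs Dp \<union> {(Suc T, 0)}"
    then have "integrable (K g' d') (\<lambda>\<omega>. (Yp s g d \<omega>)\<^sup>2)" using mom_cond by blast
    then show "integrable (K g' d') (Yp s g d)" using sqK Ym a by blast
  qed
  have Yom: "\<And>s. s\<in>{1..T} \<Longrightarrow> Yobs T Yp G D s \<in> borel_measurable M" using mom_obs by blast
  have measK: "\<And>g d (f::'a \<Rightarrow> real). f \<in> borel_measurable M \<Longrightarrow> f \<in> borel_measurable (K g d)"
  proof -
    fix g d and f :: "'a \<Rightarrow> real" assume "f \<in> borel_measurable M"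
    then show "f \<in> borel_measurable (K g d)"
      using measurable_cong_sets[OF Kset[of g d] refl, of "borel :: real measure"] by simp
  qed
  define c where "c s = cexp_ev M {\<omega>\<in>space M. D \<omega> = 0} (\<lambda>\<omega>. Yp s (Suc T) 0 \<omega> - Yp (s - 1) (Suc T) 0 \<omega>)" for s
  have GM: "\<And>S s. S \<subseteq> Gs \<Longrightarrow> s\<in>{2..T} \<Longrightarrow>
     (\<integral>\<omega>. indicator {\<omega>\<in>space M. G \<omega> \<in> S} \<omega> * (Yp s (Suc T) 0 \<omega> - Yp (s - 1) (Suc T) 0 \<omega>) \<partial>M)
       = c s * measure M {\<omega>\<in>space M. G \<omega> \<in> S}"
  proof -
    fix S s assume S: "S \<subseteq> Gs" and s: "s \<in> {2..T}"
    have s1: "s \<in> {1..T}" "s - 1 \<in> {1..T}" using s by auto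
    show "(\<integral>\<omega>. indicator {\<omega>\<in>space M. G \<omega> \<in> S} \<omega> * (Yp s (Suc T) 0 \<omega> - Yp (s - 1) (Suc T) 0 \<omega>) \<partial>M)
       = c s * measure M {\<omega>\<in>space M. G \<omega> \<in> S}"
    proof (rule disint_real[OF prob G_meas D_meas Kprob Kmeas Keq])
      show "finite S" using finGs S finite_subset by blast
      show "integrable M (\<lambda>\<omega>. Yp s (Suc T) 0 \<omega> - Yp (s - 1) (Suc T) 0 \<omega>)"
        using YintM[OF s1(1)] YintM[OF s1(2)] by auto
      show "\<forall>\<omega>\<in>space M. G \<omega> \<in> S \<longrightarrow> integrable (K (G \<omega>) (D \<omega>)) (\<lambda>\<omega>. Yp s (Suc T) 0 \<omega> - Yp (s - 1) (Suc T) 0 \<omega>) \<and>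
          integral\<^sup>L (K (G \<omega>) (D \<omega>)) (\<lambda>\<omega>. Yp s (Suc T) 0 \<omega> - Yp (s - 1) (Suc T) 0 \<omega>) = c s"
      proof (intro ballI impI conjI)
        fix \<omega> assume om: "\<omega> \<in> space M"
        have sp: "(G \<omega>, D \<omega>) \<in> supp_GD T Gs Dp" using supp_om om .
        show "integrable (K (G \<omega>) (D \<omega>)) (\<lambda>\<omega>. Yp s (Suc T) 0 \<omega> - Yp (s - 1) (Suc T) 0 \<omega>)"
          using YintK[OF sp s1(1)] YintK[OF sp s1(2)] by auto
        show "integral\<^sup>L (K (G \<omega>) (D \<omega>)) (\<lambda>\<omega>. Yp s (Suc T) 0 \<omega> - Yp (s - 1) (Suc T) 0 \<omega>) = c s"
          using SPT sp s unfolding c_def cexp_GD_def by fast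
      qed
    qed
  qed
  have P1: "\<And>g t d. g \<in> Gs - {Suc T} \<Longrightarrow> t \<in> {2..T} \<Longrightarrow> g \<le> t \<Longrightarrow> d \<in> Dp \<Longrightarrow>
        ATE M G T Yp g t d
          = cexp_GD K (\<lambda>\<omega>. Yobs T Yp G D t \<omega> - Yobs T Yp G D (g - 1) \<omega>) g d
            - cexp_ev M {\<omega>\<in>space M. W G D t \<omega> = 0}
                (\<lambda>\<omega>. Yobs T Yp G D t \<omega> - Yobs T Yp G D (g - 1) \<omega>)"
  proof -
    fix g t d assume g: "g \<in> Gs - {Suc T}" and t: "t \<in> {2..T}" and gt: "g \<le> t" and d: "d \<in> Dp"
    have g2: "2 \<le> g" "g \<le> T" using g Gs_sub by auto
    have gs: "(g, d) \<in> supp_GD T Gs Dp" using g g2 d unfolding supp_GD_def by auto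
    have gsU: "(g, d) \<in> supp_GD T Gs Dp \<union> {(Suc T, 0)}" using gs by simp
    have nT: "(Suc T, 0) \<in> supp_GD T Gs Dp \<union> {(Suc T, 0)}" by simp
    define PG where "PG = {\<omega>\<in>space M. G \<omega> = g}"
    have PGs: "PG \<in> sets M" unfolding PG_def using G_meas by measurable
    have PGS: "{\<omega>\<in>space M. G \<omega> \<in> {g}} = PG" unfolding PG_def by auto
    have mPG: "measure M PG > 0" using Gs_pos g unfolding PG_def by auto
    have t1: "t \<in> {1..T}" "t - 1 \<in> {1..T}" "g - 1 \<in> {1..T}" using t g2 gt by auto
    define a where "a = cexp_ev M PG (\<lambda>\<omega>. Yp t g d \<omega> - Yp (t - 1) (Suc T) 0 \<omega>)"
    have ATEa: "ATE M G T Yp g t d = a - c t"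
    proof -
      have I1: "integrable M (\<lambda>\<omega>. indicator PG \<omega> * (Yp t g d \<omega> - Yp (t - 1) (Suc T) 0 \<omega>))"
        using YintM[OF t1(1) gsU] YintM[OF t1(2) nT] PGs by (intro intI_ind) auto
      have I2: "integrable M (\<lambda>\<omega>. indicator PG \<omega> * (Yp t (Suc T) 0 \<omega> - Yp (t - 1) (Suc T) 0 \<omega>))"
        using YintM[OF t1(1) nT] YintM[OF t1(2) nT] PGs by (intro intI_ind) auto
      have "(\<integral>\<omega>. indicator PG \<omega> * (Yp t g d \<omega> - Yp t (Suc T) 0 \<omega>) \<partial>M)
        = (\<integral>\<omega>. indicator PG \<omega> * (Yp t g d \<omega> - Yp (t - 1) (Suc T) 0 \<omega>)
            - indicator PG \<omega> * (Yp t (Suc T) 0 \<omega> - Yp (t - 1) (Suc T) 0 \<omega>) \<partial>M)"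
        by (simp add: algebra_simps)
      also have "\<dots> = (\<integral>\<omega>. indicator PG \<omega> * (Yp t g d \<omega> - Yp (t - 1) (Suc T) 0 \<omega>) \<partial>M)
            - (\<integral>\<omega>. indicator PG \<omega> * (Yp t (Suc T) 0 \<omega> - Yp (t - 1) (Suc T) 0 \<omega>) \<partial>M)"
        using I1 I2 by (rule Bochner_Integration.integral_diff)
      also have "(\<integral>\<omega>. indicator PG \<omega> * (Yp t (Suc T) 0 \<omega> - Yp (t - 1) (Suc T) 0 \<omega>) \<partial>M)
          = c t * measure M PG"
        using GM[of "{g}" t] g t PGS by simp
      finally show ?thesis unfolding ATE_def a_def cexp_ev_def PG_def[symmetric]
        using mPG by (simp add: diff_divide_distrib)
    qed
    have RHS1: "cexp_GD K (\<lambda>\<omega>. Yobs T Yp G D t \<omega> - Yobs T Yp G D (g - 1) \<omega>) g d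
        = a + (\<Sum>s\<in>{g..t - 1}. c s)"
    proof -
      have aeK: "AE \<omega> in K g d. G \<omega> = g \<and> D \<omega> = d" using Kae gs by auto
      have AE1: "AE \<omega> in K g d. Yobs T Yp G D t \<omega> - Yobs T Yp G D (g - 1) \<omega>
           = Yp t g d \<omega> - Yp (g - 1) (Suc T) 0 \<omega>"
        using aeK by eventually_elim (use gt g2 in \<open>auto simp: Yobs_def\<close>)
      have sK: "\<And>s. s \<in> {g..t - 1} \<Longrightarrow> s \<in> {2..T} \<and> s \<in> {1..T} \<and> s - 1 \<in> {1..T}"
        using g2 t by auto
      have IK: "\<And>s. s \<in> {g..t - 1} \<Longrightarrow>
          integrable (K g d) (\<lambda>\<omega>. Yp s (Suc T) 0 \<omega> - Yp (s - 1) (Suc T) 0 \<omega>)"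
        using YintK[OF gs _ nT] sK by blast
      have IK1: "integrable (K g d) (\<lambda>\<omega>. Yp t g d \<omega> - Yp (t - 1) (Suc T) 0 \<omega>)"
        using YintK[OF gs t1(1) gsU] YintK[OF gs t1(2) nT] by auto
      have "cexp_GD K (\<lambda>\<omega>. Yobs T Yp G D t \<omega> - Yobs T Yp G D (g - 1) \<omega>) g d
          = (\<integral>\<omega>. Yp t g d \<omega> - Yp (g - 1) (Suc T) 0 \<omega> \<partial>K g d)"
        unfolding cexp_GD_def
        using measK[OF Yom[OF t1(1)]] measK[OF Yom[OF t1(3)]]
          measK[OF Ym[OF t1(1) gsU]] measK[OF Ym[OF t1(3) nT]] AE1
        by (intro integral_cong_AE) auto
      also have "\<dots> = (\<integral>\<omega>. (Yp t g d \<omega> - Yp (t - 1) (Suc T) 0 \<omega>)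
          + (\<Sum>s\<in>{g..t - 1}. Yp s (Suc T) 0 \<omega> - Yp (s - 1) (Suc T) 0 \<omega>) \<partial>K g d)"
      proof (rule Bochner_Integration.integral_cong[OF refl])
        fix \<omega>
        have "(\<Sum>s\<in>{Suc (g - 1)..t - 1}. Yp s (Suc T) 0 \<omega> - Yp (s - 1) (Suc T) 0 \<omega>)
            = Yp (t - 1) (Suc T) 0 \<omega> - Yp (g - 1) (Suc T) 0 \<omega>"
          using gt by (intro tele) auto
        moreover have "Suc (g - 1) = g" using g2 by auto
        ultimately show "Yp t g d \<omega> - Yp (g - 1) (Suc T) 0 \<omega> = (Yp t g d \<omega> - Yp (t - 1) (Suc T) 0 \<omega>)
          + (\<Sum>s\<in>{g..t - 1}. Yp s (Suc T) 0 \<omega> - Yp (s - 1) (Suc T) 0 \<omega>)" by simp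
      qed
      also have "\<dots> = (\<integral>\<omega>. Yp t g d \<omega> - Yp (t - 1) (Suc T) 0 \<omega> \<partial>K g d)
          + (\<Sum>s\<in>{g..t - 1}. \<integral>\<omega>. Yp s (Suc T) 0 \<omega> - Yp (s - 1) (Suc T) 0 \<omega> \<partial>K g d)"
      proof -
        have ISum: "integrable (K g d) (\<lambda>\<omega>. \<Sum>s\<in>{g..t - 1}. Yp s (Suc T) 0 \<omega> - Yp (s - 1) (Suc T) 0 \<omega>)"
          using IK by (intro Bochner_Integration.integrable_sum) auto
        have "(\<integral>\<omega>. (\<Sum>s\<in>{g..t - 1}. Yp s (Suc T) 0 \<omega> - Yp (s - 1) (Suc T) 0 \<omega>) \<partial>K g d)
           = (\<Sum>s\<in>{g..t - 1}. \<integral>\<omega>. Yp s (Suc T) 0 \<omega> - Yp (s - 1) (Suc T) 0 \<omega> \<partial>K g d)"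
          using IK by (intro Bochner_Integration.integral_sum) auto
        then show ?thesis using Bochner_Integration.integral_add[OF IK1 ISum] by simp
      qed
      also have "\<dots> = a + (\<Sum>s\<in>{g..t - 1}. c s)"
      proof -
        have "(\<integral>\<omega>. Yp t g d \<omega> - Yp (t - 1) (Suc T) 0 \<omega> \<partial>K g d) = a"
          using SPT gs t unfolding a_def PG_def cexp_GD_def by fast
        moreover have "(\<Sum>s\<in>{g..t - 1}. \<integral>\<omega>. Yp s (Suc T) 0 \<omega> - Yp (s - 1) (Suc T) 0 \<omega> \<partial>K g d)
            = (\<Sum>s\<in>{g..t - 1}. c s)"
        proof (rule sum.cong[OF refl])
          fix s assume "s \<in> {g..t - 1}"
          then have "s \<in> {2..T}" using sK by blast
          then show "(\<integral>\<omega>. Yp s (Suc T) 0 \<omega> - Yp (s - 1) (Suc T) 0 \<omega> \<partial>K g d) = c s"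
            using SPT gs unfolding c_def cexp_GD_def by fast
        qed
        ultimately show ?thesis by simp
      qed
      finally show ?thesis .
    qed
    have RHS2: "cexp_ev M {\<omega>\<in>space M. W G D t \<omega> = 0}
                (\<lambda>\<omega>. Yobs T Yp G D t \<omega> - Yobs T Yp G D (g - 1) \<omega>) = (\<Sum>s\<in>{g..t}. c s)"
    proof -
      define S' where "S' = {g'\<in>Gs. t < g'}"
      define W0 where "W0 = {\<omega>\<in>space M. W G D t \<omega> = 0}"
      have W0eq: "W0 = {\<omega>\<in>space M. G \<omega> \<in> S'}"
      proof (rule set_eqI)
        fix \<omega>
        show "\<omega> \<in> W0 \<longleftrightarrow> \<omega> \<in> {\<omega>\<in>space M. G \<omega> \<in> S'}"
        proof (cases "\<omega> \<in> space M")
          case True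
          have "G \<omega> \<in> Gs" using G_in True by auto
          moreover have "G \<omega> \<le> t \<Longrightarrow> D \<omega> \<noteq> 0"
            using D_treated A2a_pos True t by fastforce
          ultimately show ?thesis using True unfolding W0_def S'_def W_def by auto
        next
          case False then show ?thesis unfolding W0_def by auto
        qed
      qed
      have W0s: "W0 \<in> sets M" unfolding W0eq using G_meas by measurable
      have sS: "S' \<subseteq> Gs" unfolding S'_def by auto
      have D0s: "{\<omega>\<in>space M. D \<omega> = 0} \<in> sets M" using D_meas by measurable
      have "{\<omega>\<in>space M. D \<omega> = 0} \<subseteq> W0"
        unfolding W0_def W_def using D_zero t by auto
      then have mW0: "measure M W0 > 0"
        using finite_measure_mono[OF _ W0s] A2a_P0 by (meson less_le_trans)
      have sW: "\<And>s. s \<in> {g..t} \<Longrightarrow> s \<in> {2..T} \<and> s \<in> {1..T} \<and> s - 1 \<in> {1..T}"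
        using g2 t by auto
      have IW: "\<And>s. s \<in> {g..t} \<Longrightarrow>
          integrable M (\<lambda>\<omega>. indicator W0 \<omega> * (Yp s (Suc T) 0 \<omega> - Yp (s - 1) (Suc T) 0 \<omega>))"
      proof -
        fix s assume "s \<in> {g..t}"
        then have "s \<in> {1..T}" "s - 1 \<in> {1..T}" using sW by auto
        then show "integrable M (\<lambda>\<omega>. indicator W0 \<omega> * (Yp s (Suc T) 0 \<omega> - Yp (s - 1) (Suc T) 0 \<omega>))"
          using YintM[OF _ nT] W0s by (intro intI_ind) auto
      qed
      have "(\<integral>\<omega>. indicator W0 \<omega> * (Yobs T Yp G D t \<omega> - Yobs T Yp G D (g - 1) \<omega>) \<partial>M)
          = (\<integral>\<omega>. (\<Sum>s\<in>{g..t}. indicator W0 \<omega> * (Yp s (Suc T) 0 \<omega> - Yp (s - 1) (Suc T) 0 \<omega>)) \<partial>M)"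
      proof (rule Bochner_Integration.integral_cong[OF refl])
        fix \<omega> assume om: "\<omega> \<in> space M"
        show "indicator W0 \<omega> * (Yobs T Yp G D t \<omega> - Yobs T Yp G D (g - 1) \<omega>)
           = (\<Sum>s\<in>{g..t}. indicator W0 \<omega> * (Yp s (Suc T) 0 \<omega> - Yp (s - 1) (Suc T) 0 \<omega>))"
        proof (cases "\<omega> \<in> W0")
          case True
          then have tG: "t < G \<omega>" unfolding W0eq S'_def by auto
          have "(\<Sum>s\<in>{Suc (g - 1)..t}. Yp s (Suc T) 0 \<omega> - Yp (s - 1) (Suc T) 0 \<omega>)
              = Yp t (Suc T) 0 \<omega> - Yp (g - 1) (Suc T) 0 \<omega>"
            using gt by (intro tele) auto
          moreover have "Suc (g - 1) = g" using g2 by auto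
          moreover have "Yobs T Yp G D t \<omega> = Yp t (Suc T) 0 \<omega>"
            "Yobs T Yp G D (g - 1) \<omega> = Yp (g - 1) (Suc T) 0 \<omega>"
            using tG gt g2 unfolding Yobs_def by auto
          ultimately show ?thesis using True by (simp add: sum_distrib_left[symmetric])
        qed simp
      qed
      also have "\<dots> = (\<Sum>s\<in>{g..t}. \<integral>\<omega>. indicator W0 \<omega> * (Yp s (Suc T) 0 \<omega> - Yp (s - 1) (Suc T) 0 \<omega>) \<partial>M)"
        using IW by (intro Bochner_Integration.integral_sum) auto
      also have "\<dots> = (\<Sum>s\<in>{g..t}. c s * measure M W0)"
      proof (rule sum.cong[OF refl])
        fix s assume "s \<in> {g..t}"
        then have "s \<in> {2..T}" using sW by blast
        then show "(\<integral>\<omega>. indicator W0 \<omega> * (Yp s (Suc T) 0 \<omega> - Yp (s - 1) (Suc T) 0 \<omega>) \<partial>M)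
            = c s * measure M W0"
          using GM[OF sS] unfolding W0eq by blast
      qed
      finally show ?thesis unfolding cexp_ev_def W0_def[symmetric]
        using mW0 by (simp add: sum_distrib_right[symmetric])
    qed
    have "{g..t} = insert t {g..t - 1}" using gt t by auto
    moreover have "t \<notin> {g..t - 1}" using t by auto
    ultimately have "(\<Sum>s\<in>{g..t}. c s) = c t + (\<Sum>s\<in>{g..t - 1}. c s)" by simp
    then show "ATE M G T Yp g t d
          = cexp_GD K (\<lambda>\<omega>. Yobs T Yp G D t \<omega> - Yobs T Yp G D (g - 1) \<omega>) g d
            - cexp_ev M {\<omega>\<in>space M. W G D t \<omega> = 0}
                (\<lambda>\<omega>. Yobs T Yp G D t \<omega> - Yobs T Yp G D (g - 1) \<omega>)"
      using ATEa RHS1 RHS2 by simp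
  qed
  show ?thesis
  proof (intro conjI impI)
    show "\<forall>g\<in>Gs - {Suc T}. \<forall>t\<in>{2..T}. g \<le> t \<longrightarrow> (\<forall>d\<in>Dp.
        ATE M G T Yp g t d
          = cexp_GD K (\<lambda>\<omega>. Yobs T Yp G D t \<omega> - Yobs T Yp G D (g - 1) \<omega>) g d
            - cexp_ev M {\<omega>\<in>space M. W G D t \<omega> = 0}
                (\<lambda>\<omega>. Yobs T Yp G D t \<omega> - Yobs T Yp G D (g - 1) \<omega>))"
      using P1 by blast
  next
    assume H: "(\<exists>dL dU. 0 < dL \<and> dL < dU \<and> Dp = {dL..dU}) \<and>
       (\<forall>g\<in>Gs - {Suc T}. \<forall>t\<in>{2..T}.
          C1_within Dp (\<lambda>d. cexp_GD K (\<lambda>\<omega>. Yobs T Yp G D t \<omega> - Yobs T Yp G D (t - 1) \<omega>) g d))"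
    then obtain dL dU where dLU: "0 < dL" "dL < dU" "Dp = {dL..dU}" by blast
    have C1: "\<forall>g\<in>Gs - {Suc T}. \<forall>t\<in>{2..T}.
          C1_within Dp (\<lambda>d. cexp_GD K (\<lambda>\<omega>. Yobs T Yp G D t \<omega> - Yobs T Yp G D (t - 1) \<omega>) g d)"
      using H by blast
    show "\<forall>g\<in>Gs - {Suc T}. \<forall>t\<in>{2..T}. g \<le> t \<longrightarrow>
         (\<lambda>d. cexp_ev M {\<omega>\<in>space M. G \<omega> = g} (Yp t g d)) differentiable_on Dp \<and>
         (\<forall>d\<in>Dp. ACR M G Dp Yp g t d
            = vector_derivative
                (\<lambda>x. cexp_GD K (\<lambda>\<omega>. Yobs T Yp G D t \<omega> - Yobs T Yp G D (g - 1) \<omega>) g x)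
                (at d within Dp))"
    proof (intro ballI impI, rule conjI)
      fix g t assume g: "g \<in> Gs - {Suc T}" and t: "t \<in> {2..T}" and gt: "g \<le> t"
      have g2: "2 \<le> g" "g \<le> T" using g Gs_sub by auto
      have gs: "\<And>x. x \<in> Dp \<Longrightarrow> (g, x) \<in> supp_GD T Gs Dp" using g g2 unfolding supp_GD_def by auto
      have nT: "(Suc T, 0) \<in> supp_GD T Gs Dp \<union> {(Suc T, 0)}" by simp
      define PG where "PG = {\<omega>\<in>space M. G \<omega> = g}"
      have PGs: "PG \<in> sets M" unfolding PG_def using G_meas by measurable
      have mPG: "measure M PG > 0" using Gs_pos g unfolding PG_def by auto
      have t1: "t \<in> {1..T}" using t by auto
      define h where "h = (\<lambda>x. cexp_GD K (\<lambda>\<omega>. Yobs T Yp G D t \<omega> - Yobs T Yp G D (g - 1) \<omega>) g x)"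
      define hs where "hs s x = cexp_GD K (\<lambda>\<omega>. Yobs T Yp G D s \<omega> - Yobs T Yp G D (s - 1) \<omega>) g x" for s x
      define F where "F = (\<lambda>x. cexp_ev M {\<omega>\<in>space M. G \<omega> = g} (Yp t g x))"
      define R2 where "R2 = cexp_ev M {\<omega>\<in>space M. W G D t \<omega> = 0}
                (\<lambda>\<omega>. Yobs T Yp G D t \<omega> - Yobs T Yp G D (g - 1) \<omega>)"
      define C0 where "C0 = cexp_ev M PG (Yp t (Suc T) 0)"
      have FhC: "\<And>x. x \<in> Dp \<Longrightarrow> F x = h x + (C0 - R2)"
      proof -
        fix x assume x: "x \<in> Dp"
        have I1: "integrable M (\<lambda>\<omega>. indicator PG \<omega> * Yp t g x \<omega>)"
          using YintM[OF t1, of g x] gs[OF x] PGs by (intro intI_ind) auto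
        have I2: "integrable M (\<lambda>\<omega>. indicator PG \<omega> * Yp t (Suc T) 0 \<omega>)"
          using YintM[OF t1 nT] PGs by (intro intI_ind) auto
        have "(\<integral>\<omega>. indicator PG \<omega> * (Yp t g x \<omega> - Yp t (Suc T) 0 \<omega>) \<partial>M)
          = (\<integral>\<omega>. indicator PG \<omega> * Yp t g x \<omega> - indicator PG \<omega> * Yp t (Suc T) 0 \<omega> \<partial>M)"
          by (simp add: algebra_simps)
        also have "\<dots> = (\<integral>\<omega>. indicator PG \<omega> * Yp t g x \<omega> \<partial>M) - (\<integral>\<omega>. indicator PG \<omega> * Yp t (Suc T) 0 \<omega> \<partial>M)"
          using I1 I2 by (rule Bochner_Integration.integral_diff)
        finally have "ATE M G T Yp g t x = F x - C0"
          unfolding ATE_def F_def C0_def cexp_ev_def PG_def[symmetric]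
          by (simp add: diff_divide_distrib)
        moreover have "ATE M G T Yp g t x = h x - R2" using P1[OF g t gt x] unfolding h_def R2_def by simp
        ultimately show "F x = h x + (C0 - R2)" by simp
      qed
      have YobsK: "\<And>s x. x \<in> Dp \<Longrightarrow> s \<in> {1..T} \<Longrightarrow> integrable (K g x) (Yobs T Yp G D s)"
      proof -
        fix s x assume x: "x \<in> Dp" and s: "s \<in> {1..T}"
        have aeK: "AE \<omega> in K g x. G \<omega> = g \<and> D \<omega> = x" using Kae gs[OF x] by auto
        have "AE \<omega> in K g x. (if s < g then Yp s (Suc T) 0 \<omega> else Yp s g x \<omega>) = Yobs T Yp G D s \<omega>"
          using aeK by eventually_elim (auto simp: Yobs_def)
        moreover have "integrable (K g x) (\<lambda>\<omega>. if s < g then Yp s (Suc T) 0 \<omega> else Yp s g x \<omega>)"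
          using YintK[OF gs[OF x] s nT] YintK[OF gs[OF x] s, of g x] gs[OF x] by (cases "s < g") auto
        ultimately show "integrable (K g x) (Yobs T Yp G D s)"
          using integrable_cong_AE_imp measK[OF Yom[OF s]] by blast
      qed
      have hsum: "\<And>x. x \<in> Dp \<Longrightarrow> h x = (\<Sum>s\<in>{g..t}. hs s x)"
      proof -
        fix x assume x: "x \<in> Dp"
        have "h x = (\<integral>\<omega>. (\<Sum>s\<in>{g..t}. Yobs T Yp G D s \<omega> - Yobs T Yp G D (s - 1) \<omega>) \<partial>K g x)"
          unfolding h_def cexp_GD_def
        proof (rule Bochner_Integration.integral_cong[OF refl])
          fix \<omega>
          have "(\<Sum>s\<in>{Suc (g - 1)..t}. Yobs T Yp G D s \<omega> - Yobs T Yp G D (s - 1) \<omega>)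
              = Yobs T Yp G D t \<omega> - Yobs T Yp G D (g - 1) \<omega>"
            using gt by (intro tele) auto
          moreover have "Suc (g - 1) = g" using g2 by auto
          ultimately show "Yobs T Yp G D t \<omega> - Yobs T Yp G D (g - 1) \<omega>
              = (\<Sum>s\<in>{g..t}. Yobs T Yp G D s \<omega> - Yobs T Yp G D (s - 1) \<omega>)" by simp
        qed
        also have "\<dots> = (\<Sum>s\<in>{g..t}. hs s x)"
          unfolding hs_def cexp_GD_def
        proof (rule Bochner_Integration.integral_sum)
          fix s assume "s \<in> {g..t}"
          then have "s \<in> {1..T}" "s - 1 \<in> {1..T}" using g2 t by auto
          then show "integrable (K g x) (\<lambda>\<omega>. Yobs T Yp G D s \<omega> - Yobs T Yp G D (s - 1) \<omega>)"
            using YobsK[OF x] by auto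
        qed
        finally show "h x = (\<Sum>s\<in>{g..t}. hs s x)" .
      qed
      have "\<forall>s\<in>{g..t}. \<exists>f'. \<forall>x\<in>Dp. (hs s has_real_derivative f' x) (at x within Dp)"
      proof
        fix s assume "s \<in> {g..t}"
        then have "s \<in> {2..T}" using g2 t by auto
        then have "C1_within Dp (hs s)" using C1 g unfolding hs_def by blast
        then show "\<exists>f'. \<forall>x\<in>Dp. (hs s has_real_derivative f' x) (at x within Dp)"
          unfolding C1_within_def by blast
      qed
      then obtain f' where f': "\<forall>s\<in>{g..t}. \<forall>x\<in>Dp. (hs s has_real_derivative f' s x) (at x within Dp)"
        by metis
      define L where "L x = (\<Sum>s\<in>{g..t}. f' s x)" for x
      have Hd: "\<And>x. x \<in> Dp \<Longrightarrow> ((\<lambda>x. \<Sum>s\<in>{g..t}. hs s x) has_real_derivative L x) (at x within Dp)"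
        unfolding L_def using f' by (intro DERIV_sum) auto
      have hd: "\<And>x. x \<in> Dp \<Longrightarrow> (h has_real_derivative L x) (at x within Dp)"
      proof -
        fix x assume x: "x \<in> Dp"
        show "(h has_real_derivative L x) (at x within Dp)"
          by (rule has_field_derivative_transform_within[OF Hd[OF x] zero_less_one x])
             (simp add: hsum)
      qed
      have Fd: "\<And>x. x \<in> Dp \<Longrightarrow> (F has_real_derivative L x) (at x within Dp)"
      proof -
        fix x assume x: "x \<in> Dp"
        have "((\<lambda>x. h x + (C0 - R2)) has_real_derivative L x + 0) (at x within Dp)"
          by (intro DERIV_add hd[OF x] DERIV_const)
        then have "((\<lambda>x. h x + (C0 - R2)) has_real_derivative L x) (at x within Dp)" by simp
        then show "(F has_real_derivative L x) (at x within Dp)"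
          by (rule has_field_derivative_transform_within[OF _ zero_less_one x]) (simp add: FhC)
      qed
      show "(\<lambda>d. cexp_ev M {\<omega>\<in>space M. G \<omega> = g} (Yp t g d)) differentiable_on Dp"
        unfolding differentiable_on_def F_def[symmetric]
        using Fd by (metis differentiableI_vector has_real_derivative_iff_has_vector_derivative)
      show "\<forall>d\<in>Dp. ACR M G Dp Yp g t d
            = vector_derivative
                (\<lambda>x. cexp_GD K (\<lambda>\<omega>. Yobs T Yp G D t \<omega> - Yobs T Yp G D (g - 1) \<omega>) g x)
                (at d within Dp)"
      proof
        fix d assume d: "d \<in> Dp"
        have "ACR M G Dp Yp g t d = L d"
          unfolding ACR_def F_def[symmetric] using Fd[OF d] d dLU
          by (simp add: vector_derivative_within_closed_interval has_real_derivative_iff_has_vector_derivative)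
        moreover have "vector_derivative h (at d within Dp) = L d"
          using hd[OF d] d dLU
          by (simp add: vector_derivative_within_closed_interval has_real_derivative_iff_has_vector_derivative)
        ultimately show "ACR M G Dp Yp g t d = vector_derivative
                (\<lambda>x. cexp_GD K (\<lambda>\<omega>. Yobs T Yp G D t \<omega> - Yobs T Yp G D (g - 1) \<omega>) g x)
                (at d within Dp)" unfolding h_def by simp
      qed
    qed
  qed
qed

end
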